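(* Fix a number $x$ (real or complex). For a real parameter $\alpha$, say a sequence $(u_n)_{n\ge0}$ satisfies (RE($\alpha$)) if $(n+\alpha)u_{n+1}=2xn\,u_n-(n-\alpha)u_{n-1}$ for all $n\ge1$ (and a sequence $(w_n)_{n\ge1}$ satisfies it for $n\ge2$ if the same identity holds for all $n\ge2$). If $(u_n)_{n\ge0}$ satisfies $(n+\tfrac12)u_{n+1}=2xn\,u_n-(n-\tfrac12)u_{n-1}$ for all $n\ge1$, and $\hat u_n=\frac1n\,(u_{n+1}-u_{n-1})$ for $n\ge1$, then $(n+\tfrac32)\hat u_{n+1}=2xn\,\hat u_n-(n-\tfrac32)\hat u_{n-1}$ for all $n\ge2$. *)

theory Defs
  imports Complex_Main
begin

definition RE :: "complex \<Rightarrow> real \<Rightarrow> (nat \<Rightarrow> complex) \<Rightarrow> bool" where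
  "RE x \<alpha> u \<longleftrightarrow> (\<forall>n\<ge>1. (of_nat n + of_real \<alpha>) * u (n+1)
        = 2 * x * of_nat n * u n - (of_nat n - of_real \<alpha>) * u (n-1))"

definition RE_from2 :: "complex \<Rightarrow> real \<Rightarrow> (nat \<Rightarrow> complex) \<Rightarrow> bool" where
  "RE_from2 x \<alpha> w \<longleftrightarrow> (\<forall>n\<ge>2. (of_nat n + of_real \<alpha>) * w (n+1)
        = 2 * x * of_nat n * w n - (of_nat n - of_real \<alpha>) * w (n-1))"

end

theory Submission
  imports Defs
begin

theorem theorem1:
  fixes x :: complex and u uhat :: "nat \<Rightarrow> complex"
  assumes "RE x (1/2) u"
    and "\<And>n. n \<ge> 1 \<Longrightarrow> uhat n = (u (n+1) - u (n-1)) / of_nat n"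
  shows "RE_from2 x (3/2) uhat"
  unfolding RE_from2_def
proof (intro allI impI)
  fix n :: nat assume "2 \<le> n"
  then obtain k where n: "n = k + 2" by (metis add.commute le_Suc_ex)
  have R: "\<And>m. m \<ge> 1 \<Longrightarrow> (of_nat m + 1/2) * u (m+1)
        = 2 * x * of_nat m * u m - (of_nat m - 1/2) * u (m-1)"
    using assms(1) unfolding RE_def by simp
  have e1: "(of_nat k + 3/2) * u (k+2) = 2 * x * (of_nat k + 1) * u (k+1) - (of_nat k + 1/2) * u k"
    using R[of "k+1"] by (simp add: algebra_simps)
  have e3: "(of_nat k + 7/2) * u (k+4) = 2 * x * (of_nat k + 3) * u (k+3) - (of_nat k + 5/2) * u (k+2)"
    using R[of "k+3"] by (simp add: algebra_simps numeral_eq_Suc)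
  have h3: "uhat (k+3) = (u (k+4) - u (k+2)) / (of_nat k + 3)"
    using assms(2)[of "k+3"] by (simp add: numeral_eq_Suc algebra_simps)
  have h2: "uhat (k+2) = (u (k+3) - u (k+1)) / (of_nat k + 2)"
    using assms(2)[of "k+2"] by (simp add: numeral_eq_Suc algebra_simps)
  have h1: "uhat (k+1) = (u (k+2) - u k) / (of_nat k + 1)"
    using assms(2)[of "k+1"] by (simp add: algebra_simps)
  have nz3: "(of_nat k + 3 :: complex) \<noteq> 0" "(of_nat k + 2 :: complex) \<noteq> 0" "(of_nat k + 1 :: complex) \<noteq> 0"
    by (metis of_nat_numeral of_nat_add of_nat_eq_0_iff add_is_0 zero_neq_numeral,
        metis of_nat_numeral of_nat_add of_nat_eq_0_iff add_is_0 zero_neq_numeral,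
        metis of_nat_1 of_nat_add of_nat_eq_0_iff add_is_0 one_neq_zero)
  have key: "(of_nat k + 1) * (of_nat k + 7/2) * (u (k+4) - u (k+2))
     = 2 * x * (of_nat k + 3) * (of_nat k + 1) * (u (k+3) - u (k+1))
       - (of_nat k + 3) * (of_nat k + 1/2) * (u (k+2) - u k)"
  proof -
    have L: "\<And>(c::complex) a0 a1 a2 a3 a4.
      (c + 3/2) * a2 = 2 * x * (c + 1) * a1 - (c + 1/2) * a0 \<Longrightarrow>
      (c + 7/2) * a4 = 2 * x * (c + 3) * a3 - (c + 5/2) * a2 \<Longrightarrow>
      (c + 1) * (c + 7/2) * (a4 - a2) = 2 * x * (c + 3) * (c + 1) * (a3 - a1) - (c + 3) * (c + 1/2) * (a2 - a0)"
    proof -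
      fix c a0 a1 a2 a3 a4 :: complex
      assume A: "(c + 3/2) * a2 = 2 * x * (c + 1) * a1 - (c + 1/2) * a0"
        and B: "(c + 7/2) * a4 = 2 * x * (c + 3) * a3 - (c + 5/2) * a2"
      have "(c + 1) * (c + 7/2) * (a4 - a2) = (c + 1) * ((c + 7/2) * a4) - (c + 1) * (c + 7/2) * a2"
        by (simp add: field_simps)
      also have "\<dots> = (c + 1) * (2 * x * (c + 3) * a3 - (c + 5/2) * a2) - (c + 1) * (c + 7/2) * a2"
        by (simp only: B)
      also have "\<dots> = 2 * x * (c + 3) * (c + 1) * a3 - (c+3) * (2 * x * (c + 1) * a1 - (c + 1/2) * a0)
          + (c+3) * (2 * x * (c + 1) * a1 - (c + 1/2) * a0) - (c + 1) * (2*c + 6) * a2"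
        by (simp add: field_simps)
      also have "\<dots> = 2 * x * (c + 3) * (c + 1) * a3 - (c+3) * (2 * x * (c + 1) * a1 - (c + 1/2) * a0)
          + (c+3) * ((c + 3/2) * a2) - (c + 1) * (2*c + 6) * a2"
        by (simp only: A)
      also have "\<dots> = 2 * x * (c + 3) * (c + 1) * (a3 - a1) - (c + 3) * (c + 1/2) * (a2 - a0)"
        by (simp add: field_simps)
      finally show "(c + 1) * (c + 7/2) * (a4 - a2) = 2 * x * (c + 3) * (c + 1) * (a3 - a1) - (c + 3) * (c + 1/2) * (a2 - a0)" .
    qed
    show ?thesis by (rule L[OF e1 e3])
  qed
  have gen: "\<And>A B C (c::complex). c + 3 \<noteq> 0 \<Longrightarrow> c + 2 \<noteq> 0 \<Longrightarrow> c + 1 \<noteq> 0 \<Longrightarrow>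
      (c + 1) * (c + 7/2) * A = 2 * x * (c + 3) * (c + 1) * B - (c + 3) * (c + 1/2) * C \<Longrightarrow>
      (c + 7/2) * (A / (c + 3)) = 2 * x * (c + 2) * (B / (c + 2)) - (c + 1/2) * (C / (c + 1))"
  proof -
    fix A B C c :: complex
    assume n3: "c + 3 \<noteq> 0" and n2: "c + 2 \<noteq> 0" and n1: "c + 1 \<noteq> 0"
      and K: "(c + 1) * (c + 7/2) * A = 2 * x * (c + 3) * (c + 1) * B - (c + 3) * (c + 1/2) * C"
    have d: "(c+1)*(c+3) \<noteq> 0" using n1 n3 by simp
    have "(c + 7/2) * (A / (c + 3)) = ((c + 1) * ((c + 7/2) * A)) / ((c+1)*(c+3))"
      using n1 n3 by simp
    also have "\<dots> = ((c + 1) * (c + 7/2) * A) / ((c+1)*(c+3))"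
      by (simp only: mult.assoc)
    also have "\<dots> = (2 * x * (c + 3) * (c + 1) * B - (c + 3) * (c + 1/2) * C) / ((c+1)*(c+3))"
      by (simp only: K)
    also have "\<dots> = (2*x*(c+3)*(c+1)*B)/((c+1)*(c+3)) - ((c+3)*(c+1/2)*C)/((c+1)*(c+3))"
      by (rule diff_divide_distrib)
    also have "\<dots> = 2 * x * B - (c + 1/2) * (C / (c + 1))"
    proof -
      have q1: "(2*x*(c+3)*(c+1)*B) = (2*x*B)*((c+1)*(c+3))" by (simp add: algebra_simps)
      have q2: "(c+3)*(c+1/2)*C = ((c+1/2)*C)*(c+3)" by (simp add: algebra_simps)
      have q3: "(2*x*B)*((c+1)*(c+3)) / ((c+1)*(c+3)) = 2*x*B"
        by (rule nonzero_mult_div_cancel_right[OF d])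
      have q4: "((c+1/2)*C)*(c+3) / ((c+1)*(c+3)) = ((c+1/2)*C) / (c+1)"
        by (rule mult_divide_mult_cancel_right[OF n3])
      show ?thesis unfolding q1 q2 q3 q4 by simp
    qed
    also have "\<dots> = 2 * x * (c + 2) * (B / (c + 2)) - (c + 1/2) * (C / (c + 1))"
      using n2 by simp
    finally show "(c + 7/2) * (A / (c + 3)) = 2 * x * (c + 2) * (B / (c + 2)) - (c + 1/2) * (C / (c + 1))" .
  qed
  have "(of_nat k + 7/2) * uhat (k+3) = 2 * x * (of_nat k + 2) * uhat (k+2) - (of_nat k + 1/2) * uhat (k+1)"
    unfolding h1 h2 h3 by (rule gen[OF nz3 key])
  then show "(of_nat n + of_real (3/2)) * uhat (n+1)
        = 2 * x * of_nat n * uhat n - (of_nat n - of_real (3/2)) * uhat (n-1)"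
    by (simp add: n algebra_simps numeral_eq_Suc)
qed

end
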